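(* Let $\nu\in\mathbb{N}$, let $(X,d)$ be a $\nu$-generalized metric space, and let $\{x_n\}_{n\in\mathbb{N}}$ be a sequence in $X$ whose terms are pairwise distinct and such that $d(x_n,x_{n+1})+d(x_n,x_{n+2})\to0$ as $n\to\infty$. Let $m:X\times X\to[0,\infty)$ be a function such that for any two subsequences $\{x_{p_i}\}$ and $\{x_{q_i}\}$ of $\{x_n\}$, $$\limsup_{i\to\infty} m(x_{p_i},x_{q_i})\le\limsup_{i\to\infty} d(x_{p_i},x_{q_i}).$$ Suppose that for every $\epsilon>0$ and any two subsequences $\{x_{p_i}\}$ and $\{x_{q_i}\}$, if $\limsup_{i\to\infty} m(x_{p_i},x_{q_i})\le\epsilon$, then there is $N$ such that $d(x_{p_i+1},x_{q_i+1})\le\epsilon$ for all $i\ge N$. Then $\{x_n\}$ is Cauchy.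
   Context: Let $X$ be a nonempty set, $d:X\times X\to[0,\infty)$, and $\nu\in\mathbb{N}$. $(X,d)$ is a $\nu$-generalized metric space if: (1) $d(x,y)=0$ iff $x=y$; (2) $d(x,y)=d(y,x)$ for all $x,y$; (3) $d(x,y)\le d(x,u_1)+d(u_1,u_2)+\dots+d(u_\nu,y)$ for every set $\{x,u_1,\dots,u_\nu,y\}$ of $\nu+2$ pairwise distinct elements of $X$. A sequence $\{x_n\}$ in $X$ is Cauchy if $\lim_{n\to\infty}\sup\{d(x_n,x_{n+1+m}): m\in\mathbb{Z}^+\}=0$, where $\mathbb{Z}^+$ denotes the nonnegative integers. A subsequence $\{x_{p_i}\}$ means $p_1<p_2<\cdots$ in $\mathbb{N}$. *)

theory Defs
  imports Complex_Main "HOL-Library.Extended_Real" "HOL-Library.Liminf_Limsup"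
begin

definition nu_gen_metric :: "nat \<Rightarrow> ('a \<Rightarrow> 'a \<Rightarrow> real) \<Rightarrow> bool" where
  "nu_gen_metric \<nu> d \<longleftrightarrow>
     (\<forall>x y. d x y \<ge> 0) \<and>
     (\<forall>x y. d x y = 0 \<longleftrightarrow> x = y) \<and>
     (\<forall>x y. d x y = d y x) \<and>
     (\<forall>u :: nat \<Rightarrow> 'a. inj_on u {0..Suc \<nu>} \<longrightarrow>
        d (u 0) (u (Suc \<nu>)) \<le> (\<Sum>i\<le>\<nu>. d (u i) (u (Suc i))))"

definition gen_cauchy :: "('a \<Rightarrow> 'a \<Rightarrow> real) \<Rightarrow> (nat \<Rightarrow> 'a) \<Rightarrow> bool" where
  "gen_cauchy d x \<longleftrightarrow>
     (\<lambda>n. SUP k. ereal (d (x n) (x (n + 1 + k)))) \<longlonglongrightarrow> 0"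

end

theory Submission
  imports Defs
begin

definition sg :: "('a \<Rightarrow> 'a \<Rightarrow> real) \<Rightarrow> (nat \<Rightarrow> 'a) \<Rightarrow> nat \<Rightarrow> bool" where
  "sg d x g \<longleftrightarrow> (\<forall>e>0. \<exists>N. \<forall>n\<ge>N. d (x n) (x (n+g)) < e)"

lemma fin_ex:
  fixes L :: nat and P :: "nat \<Rightarrow> nat \<Rightarrow> bool"
  assumes "\<forall>i\<le>L. \<exists>N. \<forall>n\<ge>N. P i n"
  shows "\<exists>N. \<forall>i\<le>L. \<forall>n\<ge>N. P i n"
  using assms
proof (induction L)
  case 0 then show ?case by auto
next
  case (Suc L)
  then have "\<forall>i\<le>L. \<exists>N. \<forall>n\<ge>N. P i n" by auto
  with Suc.IH obtain N1 where N1: "\<forall>i\<le>L. \<forall>n\<ge>N1. P i n" by blast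
  from Suc.prems obtain N2 where N2: "\<forall>n\<ge>N2. P (Suc L) n" by blast
  show ?case
  proof (rule exI[of _ "max N1 N2"], intro allI impI)
    fix i n assume "i \<le> Suc L" "max N1 N2 \<le> n"
    then have "n \<ge> N1" "n \<ge> N2" "i \<le> L \<or> i = Suc L" by auto
    then show "P i n" using N1 N2 by blast
  qed
qed

lemma gen_ineq:
  fixes x :: "nat \<Rightarrow> 'a" and w :: "nat \<Rightarrow> nat" and n :: nat
  assumes "nu_gen_metric \<nu> d" "inj x" "inj_on w {0..Suc \<nu>}"
  shows "d (x (n + w 0)) (x (n + w (Suc \<nu>))) \<le> (\<Sum>i\<le>\<nu>. d (x (n + w i)) (x (n + w (Suc i))))"
proof -
  have inj: "inj_on (\<lambda>i. x (n + w i)) {0..Suc \<nu>}"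
  proof (rule inj_onI)
    fix i k assume "i \<in> {0..Suc \<nu>}" "k \<in> {0..Suc \<nu>}" "x (n + w i) = x (n + w k)"
    moreover from this(3) have "w i = w k" using assms(2) by (simp add: inj_eq)
    ultimately show "i = k" using assms(3) unfolding inj_on_def by blast
  qed
  from assms(1) have "\<forall>u::nat\<Rightarrow>'a. inj_on u {0..Suc \<nu>} \<longrightarrow>
        d (u 0) (u (Suc \<nu>)) \<le> (\<Sum>i\<le>\<nu>. d (u i) (u (Suc i)))"
    unfolding nu_gen_metric_def by blast
  from this[rule_format, OF inj] show ?thesis by simp
qed

lemma sg0:
  fixes x :: "nat \<Rightarrow> 'a"
  assumes "nu_gen_metric \<nu> d" shows "sg d x 0"
proof -
  have "\<forall>a. d a a = 0" using assms unfolding nu_gen_metric_def by blast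
  then show ?thesis unfolding sg_def by auto
qed

lemma path_sg:
  fixes x :: "nat \<Rightarrow> 'a" and w :: "nat \<Rightarrow> nat"
  assumes "nu_gen_metric \<nu> d" "inj x" "inj_on w {0..Suc \<nu>}"
    "\<forall>i\<le>\<nu>. sg d x (w (Suc i) - w i) \<and> sg d x (w i - w (Suc i))"
  shows "\<forall>e>0. \<exists>N. \<forall>n\<ge>N. d (x (n + w 0)) (x (n + w (Suc \<nu>))) < e"
proof (intro allI impI)
  fix e :: real assume e: "e > 0"
  define e' where "e' = e / (real \<nu> + 1)"
  have e': "e' > 0" using e by (simp add: e'_def)
  have sym: "\<forall>a b. d a b = d b a" using assms(1) unfolding nu_gen_metric_def by blast
  have "\<forall>i\<le>\<nu>. \<exists>N. \<forall>n\<ge>N. d (x (n + w i)) (x (n + w (Suc i))) < e'"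
  proof (intro allI impI)
    fix i assume i: "i \<le> \<nu>"
    show "\<exists>N. \<forall>n\<ge>N. d (x (n + w i)) (x (n + w (Suc i))) < e'"
    proof (cases "w i \<le> w (Suc i)")
      case True
      from assms(4) i e' obtain N where N: "\<forall>n\<ge>N. d (x n) (x (n + (w (Suc i) - w i))) < e'"
        unfolding sg_def by blast
      show ?thesis
      proof (rule exI[of _ N], intro allI impI)
        fix n assume "N \<le> n"
        then have "d (x (n + w i)) (x (n + w i + (w (Suc i) - w i))) < e'" using N by simp
        moreover have "n + w i + (w (Suc i) - w i) = n + w (Suc i)" using True by simp
        ultimately show "d (x (n + w i)) (x (n + w (Suc i))) < e'" by simp
      qed
    next
      case False
      from assms(4) i e' obtain N where N: "\<forall>n\<ge>N. d (x n) (x (n + (w i - w (Suc i)))) < e'"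
        unfolding sg_def by blast
      show ?thesis
      proof (rule exI[of _ N], intro allI impI)
        fix n assume "N \<le> n"
        then have "d (x (n + w (Suc i))) (x (n + w (Suc i) + (w i - w (Suc i)))) < e'" using N by simp
        moreover have "n + w (Suc i) + (w i - w (Suc i)) = n + w i" using False by simp
        ultimately show "d (x (n + w i)) (x (n + w (Suc i))) < e'" using sym by metis
      qed
    qed
  qed
  from fin_ex[OF this] obtain N where N: "\<forall>i\<le>\<nu>. \<forall>n\<ge>N. d (x (n + w i)) (x (n + w (Suc i))) < e'"
    by blast
  show "\<exists>N. \<forall>n\<ge>N. d (x (n + w 0)) (x (n + w (Suc \<nu>))) < e"
  proof (rule exI[of _ N], intro allI impI)
    fix n assume n: "N \<le> n"
    have "d (x (n + w 0)) (x (n + w (Suc \<nu>))) \<le> (\<Sum>i\<le>\<nu>. d (x (n + w i)) (x (n + w (Suc i))))"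
      by (rule gen_ineq[OF assms(1-3)])
    also have "\<dots> < (\<Sum>i\<le>\<nu>. e')"
      by (rule sum_strict_mono) (use N n in auto)
    also have "\<dots> = e" using e by (simp add: e'_def field_simps)
    finally show "d (x (n + w 0)) (x (n + w (Suc \<nu>))) < e" .
  qed
qed

lemma shift_sg:
  fixes x :: "nat \<Rightarrow> 'a" and c j :: nat
  assumes "\<forall>e>0. \<exists>N. \<forall>n\<ge>N. d (x (n + c)) (x (n + (c + j))) < e"
  shows "sg d x j"
  unfolding sg_def
proof (intro allI impI)
  fix e :: real assume "e > 0"
  then obtain N where N: "\<forall>n\<ge>N. d (x (n + c)) (x (n + (c + j))) < e" using assms by blast
  show "\<exists>N. \<forall>n\<ge>N. d (x n) (x (n + j)) < e"
  proof (rule exI[of _ "N + c"], intro allI impI)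
    fix n assume n: "N + c \<le> n"
    then have "n - c \<ge> N" by simp
    then have "d (x (n - c + c)) (x (n - c + (c + j))) < e" using N by blast
    moreover have "n - c + c = n" "n - c + (c+j) = n + j" using n by simp_all
    ultimately show "d (x n) (x (n + j)) < e" by simp
  qed
qed

lemma sg_big:
  fixes x :: "nat \<Rightarrow> 'a"
  assumes "nu_gen_metric \<nu> d" "inj x" "sg d x 1" "sg d x (j - \<nu>)" "j > \<nu>"
  shows "sg d x j"
proof -
  define w where "w = (\<lambda>i. if i \<le> \<nu> then i else j)"
  have inj: "inj_on w {0..Suc \<nu>}" unfolding inj_on_def w_def using assms(5) by auto
  have gaps: "\<forall>i\<le>\<nu>. sg d x (w (Suc i) - w i) \<and> sg d x (w i - w (Suc i))"
  proof (intro allI impI)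
    fix i assume i: "i \<le> \<nu>"
    show "sg d x (w (Suc i) - w i) \<and> sg d x (w i - w (Suc i))"
    proof (cases "i < \<nu>")
      case True
      then have "w (Suc i) - w i = 1" "w i - w (Suc i) = 0" by (auto simp: w_def)
      then show ?thesis using assms(3) sg0[OF assms(1)] by simp
    next
      case False
      then have "w (Suc i) - w i = j - \<nu>" "w i - w (Suc i) = 0" using i assms(5) by (auto simp: w_def)
      then show ?thesis using assms(4) sg0[OF assms(1)] by simp
    qed
  qed
  have "\<forall>e>0. \<exists>N. \<forall>n\<ge>N. d (x (n + 0)) (x (n + (0 + j))) < e"
    using path_sg[OF assms(1,2) inj gaps] by (simp add: w_def)
  then show ?thesis by (rule shift_sg)
qed

lemma sg_small:
  fixes x :: "nat \<Rightarrow> 'a"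
  assumes "nu_gen_metric \<nu> d" "inj x" "sg d x 1" "sg d x (\<nu>+1)" "sg d x (\<nu>+2)" "3 \<le> j" "j \<le> \<nu>"
  shows "sg d x j"
proof -
  define h where "h = j div 2"
  define J where "J = (if odd j then \<nu>+1 else \<nu>+2)"
  define r where "r = (if odd j then \<nu> - h else \<nu> + 1 - h)"
  have hj: "j = (if odd j then 2*h+1 else 2*h)" unfolding h_def by presburger
  have r2: "2*r = J + \<nu> - j" and rJ: "r < J" and rn: "r \<le> \<nu>" and Jr: "J \<le> r + j"
    using assms(6,7) hj unfolding r_def J_def by (cases "odd j"; simp; linarith)+
  have sgJ: "sg d x J" using assms(4,5) unfolding J_def by simp
  define w where "w = (\<lambda>i. if i \<le> r then r - i else J + (i - Suc r))"
  have inj: "inj_on w {0..Suc \<nu>}" unfolding inj_on_def w_def using rJ by auto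
  have gaps: "\<forall>i\<le>\<nu>. sg d x (w (Suc i) - w i) \<and> sg d x (w i - w (Suc i))"
  proof (intro allI impI)
    fix i assume i: "i \<le> \<nu>"
    have "w (Suc i) - w i \<in> {0,1,J} \<and> w i - w (Suc i) \<in> {0,1,J}"
      unfolding w_def using rJ by auto
    then show "sg d x (w (Suc i) - w i) \<and> sg d x (w i - w (Suc i))"
      using sgJ assms(3) sg0[OF assms(1)] by auto
  qed
  have w0: "w 0 = r" by (simp add: w_def)
  have nJ: "\<nu> < J" unfolding J_def by simp
  have w1: "w (Suc \<nu>) = r + j" using r2 rn rJ Jr nJ assms(7) by (simp add: w_def)
  have "\<forall>e>0. \<exists>N. \<forall>n\<ge>N. d (x (n + r)) (x (n + (r + j))) < e"
    using path_sg[OF assms(1,2) inj gaps] by (simp add: w0 w1)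
  then show ?thesis by (rule shift_sg)
qed

lemma sg_all:
  fixes x :: "nat \<Rightarrow> 'a"
  assumes "nu_gen_metric \<nu> d" "inj x" "\<nu> \<ge> 1" "sg d x 1" "sg d x 2"
  shows "sg d x j"
proof -
  have a: "sg d x (\<nu>+1)" by (rule sg_big[OF assms(1,2,4)]) (use assms(4) in simp_all)
  have b: "sg d x (\<nu>+2)" by (rule sg_big[OF assms(1,2,4)]) (use assms(5) in simp_all)
  show ?thesis
  proof (induction j rule: less_induct)
    case (less j)
    show ?case
    proof (cases "j > \<nu>")
      case True
      then have "j - \<nu> < j" using assms(3) by simp
      then show ?thesis using sg_big[OF assms(1,2,4) less.IH True] by simp
    next
      case False
      then consider "j = 0" | "j = 1" | "j = 2" | "3 \<le> j" by linarith
      then show ?thesis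
      proof cases
        case 4 then show ?thesis using sg_small[OF assms(1,2,4) a b] False by simp
      qed (use sg0[OF assms(1)] assms(4,5) in auto)
    qed
  qed
qed


lemma MK:
  fixes x :: "nat \<Rightarrow> 'a" and d m :: "'a \<Rightarrow> 'a \<Rightarrow> real"
  assumes m1: "\<forall>p q. strict_mono p \<and> strict_mono q \<longrightarrow>
           limsup (\<lambda>i. ereal (m (x (p i)) (x (q i))))
             \<le> limsup (\<lambda>i. ereal (d (x (p i)) (x (q i))))"
    and m2: "\<forall>\<epsilon>>0. \<forall>p q. strict_mono p \<and> strict_mono q \<and>
           limsup (\<lambda>i. ereal (m (x (p i)) (x (q i)))) \<le> ereal \<epsilon> \<longrightarrow>
           (\<exists>N. \<forall>i\<ge>N. d (x (p i + 1)) (x (q i + 1)) \<le> \<epsilon>)"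
    and eps: "\<epsilon> > 0"
  shows "\<exists>\<delta>>0. \<exists>N. \<forall>a b. N \<le> a \<longrightarrow> N \<le> b \<longrightarrow> d (x a) (x b) < \<epsilon> + \<delta> \<longrightarrow> d (x (a+1)) (x (b+1)) \<le> \<epsilon>"
proof (rule ccontr)
  assume H: "\<not> ?thesis"
  have "\<forall>N. \<exists>a b. N \<le> a \<and> N \<le> b \<and> d (x a) (x b) < \<epsilon> + inverse (real (Suc N)) \<and> \<epsilon> < d (x (a+1)) (x (b+1))"
  proof
    fix N :: nat
    have "inverse (real (Suc N)) > 0" by simp
    with H show "\<exists>a b. N \<le> a \<and> N \<le> b \<and> d (x a) (x b) < \<epsilon> + inverse (real (Suc N)) \<and> \<epsilon> < d (x (a+1)) (x (b+1))"
      by (auto simp: not_le)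
  qed
  then obtain A B where AB: "\<And>N. N \<le> A N \<and> N \<le> B N \<and> d (x (A N)) (x (B N)) < \<epsilon> + inverse (real (Suc N)) \<and> \<epsilon> < d (x (A N + 1)) (x (B N + 1))"
    by metis
  define g where "g = rec_nat 0 (\<lambda>i v. max (A v) (B v) + 1)"
  have gS: "\<And>i. g (Suc i) = max (A (g i)) (B (g i)) + 1" by (simp add: g_def)
  have gi: "i \<le> g i" for i
  proof (induction i)
    case 0 then show ?case by simp
  next
    case (Suc i)
    have "g i \<le> A (g i)" using AB by blast
    then show ?case using Suc.IH gS[of i] by linarith
  qed
  define p where "p = (\<lambda>i. A (g i))"
  define q where "q = (\<lambda>i. B (g i))"
  have sp: "strict_mono p" unfolding strict_mono_Suc_iff p_def
  proof
    fix i
    have "g (Suc i) \<le> A (g (Suc i))" using AB by blast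
    then show "A (g i) < A (g (Suc i))" using gS[of i] by linarith
  qed
  have sq: "strict_mono q" unfolding strict_mono_Suc_iff q_def
  proof
    fix i
    have "g (Suc i) \<le> B (g (Suc i))" using AB by blast
    then show "B (g i) < B (g (Suc i))" using gS[of i] by linarith
  qed
  have "limsup (\<lambda>i. ereal (d (x (p i)) (x (q i)))) \<le> limsup (\<lambda>i. ereal (\<epsilon> + inverse (real (Suc i))))"
  proof (rule Limsup_mono, rule always_eventually, rule allI)
    fix i
    have "inverse (real (Suc (g i))) \<le> inverse (real (Suc i))"
      using gi[of i] by (simp add: le_imp_inverse_le)
    moreover have "d (x (p i)) (x (q i)) < \<epsilon> + inverse (real (Suc (g i)))"
      using AB[of "g i"] unfolding p_def q_def by blast
    ultimately have "d (x (p i)) (x (q i)) \<le> \<epsilon> + inverse (real (Suc i))" by linarith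
    then show "ereal (d (x (p i)) (x (q i))) \<le> ereal (\<epsilon> + inverse (real (Suc i)))"
      by simp
  qed
  also have "\<dots> = ereal \<epsilon>"
  proof (rule lim_imp_Limsup[OF trivial_limit_sequentially])
    have "(\<lambda>i. \<epsilon> + inverse (real (Suc i))) \<longlonglongrightarrow> \<epsilon> + 0"
      by (intro tendsto_add tendsto_const LIMSEQ_inverse_real_of_nat)
    then show "(\<lambda>i. ereal (\<epsilon> + inverse (real (Suc i)))) \<longlonglongrightarrow> ereal \<epsilon>"
      by (simp add: tendsto_ereal)
  qed
  finally have "limsup (\<lambda>i. ereal (m (x (p i)) (x (q i)))) \<le> ereal \<epsilon>"
    using m1 sp sq by (meson order_trans)
  then obtain N where N: "\<forall>i\<ge>N. d (x (p i + 1)) (x (q i + 1)) \<le> \<epsilon>"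
    using m2 eps sp sq by blast
  from N[rule_format, of N] AB[of "g N"] show False unfolding p_def q_def by simp
qed

lemma chain:
  fixes x :: "nat \<Rightarrow> 'a"
  assumes "nu_gen_metric \<nu> d" "inj x" "K > \<nu>"
  shows "d (x a) (x (a+K)) \<le> (\<Sum>i<\<nu>. d (x (a+i)) (x (a+Suc i))) + d (x (a+\<nu>)) (x (a+K))"
proof -
  define w where "w = (\<lambda>i. if i \<le> \<nu> then i else K)"
  have inj: "inj_on w {0..Suc \<nu>}" unfolding inj_on_def w_def using assms(3) by auto
  have "d (x (a + w 0)) (x (a + w (Suc \<nu>))) \<le> (\<Sum>i\<le>\<nu>. d (x (a + w i)) (x (a + w (Suc i))))"
    by (rule gen_ineq[OF assms(1,2) inj])
  also have "\<dots> = (\<Sum>i<Suc \<nu>. d (x (a + w i)) (x (a + w (Suc i))))"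
    by (simp add: lessThan_Suc_atMost)
  also have "\<dots> = (\<Sum>i<\<nu>. d (x (a + w i)) (x (a + w (Suc i)))) + d (x (a+\<nu>)) (x (a+K))"
    by (simp add: w_def)
  also have "(\<Sum>i<\<nu>. d (x (a + w i)) (x (a + w (Suc i)))) = (\<Sum>i<\<nu>. d (x (a+i)) (x (a+Suc i)))"
    by (rule sum.cong) (auto simp: w_def)
  finally show ?thesis by (simp add: w_def)
qed

theorem theorem2p3:
  fixes \<nu> :: nat and d m :: "'a \<Rightarrow> 'a \<Rightarrow> real" and x :: "nat \<Rightarrow> 'a"
  assumes "\<nu> \<ge> 1"
    and "nu_gen_metric \<nu> d"
    and "inj x"
    and "(\<lambda>n. d (x n) (x (n + 1)) + d (x n) (x (n + 2))) \<longlonglongrightarrow> 0"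
    and "\<forall>a b. m a b \<ge> 0"
    and "\<forall>p q. strict_mono p \<and> strict_mono q \<longrightarrow>
           limsup (\<lambda>i. ereal (m (x (p i)) (x (q i))))
             \<le> limsup (\<lambda>i. ereal (d (x (p i)) (x (q i))))"
    and "\<forall>\<epsilon>>0. \<forall>p q. strict_mono p \<and> strict_mono q \<and>
           limsup (\<lambda>i. ereal (m (x (p i)) (x (q i)))) \<le> ereal \<epsilon> \<longrightarrow>
           (\<exists>N. \<forall>i\<ge>N. d (x (p i + 1)) (x (q i + 1)) \<le> \<epsilon>)"
  shows "gen_cauchy d x"
proof -
  note met = assms(2)
  have nn: "\<forall>a b. d a b \<ge> 0" and sym: "\<forall>a b. d a b = d b a"
    using met unfolding nu_gen_metric_def by blast+
  have sgg: "sg d x g" if g: "g = 1 \<or> g = 2" for g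
    unfolding sg_def
  proof (intro allI impI)
    fix e :: real assume "e > 0"
    from LIMSEQ_D[OF assms(4) this] obtain N where
      N: "\<forall>n\<ge>N. norm (d (x n) (x (n+1)) + d (x n) (x (n+2)) - 0) < e" by blast
    show "\<exists>N. \<forall>n\<ge>N. d (x n) (x (n+g)) < e"
    proof (rule exI[of _ N], intro allI impI)
      fix n assume "N \<le> n"
      then have h: "\<bar>d (x n) (x (n+1)) + d (x n) (x (n+2))\<bar> < e" using N by simp
      have "d (x n) (x (n+1)) \<ge> 0" "d (x n) (x (n+2)) \<ge> 0" using nn by blast+
      then show "d (x n) (x (n+g)) < e" using g h by auto
    qed
  qed
  have sgall: "\<And>j. sg d x j" by (rule sg_all[OF met assms(3) assms(1) sgg sgg]) simp_all
  have claim: "\<forall>e>0. \<exists>M. \<forall>n\<ge>M. \<forall>k. d (x n) (x (n+1+k)) < e"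
  proof (intro allI impI)
    fix e :: real assume e: "e>0"
    define \<epsilon> where "\<epsilon> = e/2"
    have \<epsilon>: "\<epsilon> > 0" using e by (simp add: \<epsilon>_def)
    obtain \<delta> N where \<delta>: "\<delta> > 0" and MKp: "\<forall>a b. N \<le> a \<longrightarrow> N \<le> b \<longrightarrow> d (x a) (x b) < \<epsilon> + \<delta> \<longrightarrow> d (x (a+1)) (x (b+1)) \<le> \<epsilon>"
      using MK[of m x d, OF assms(6) assms(7) \<epsilon>] by blast
    define \<delta>' where "\<delta>' = min \<delta> \<epsilon>"
    have \<delta>': "\<delta>' > 0" "\<delta>' \<le> \<epsilon>" "\<delta>' \<le> \<delta>" using \<delta> \<epsilon> by (auto simp: \<delta>'_def)
    have MK': "d (x (a+1)) (x (b+1)) \<le> \<epsilon>" if "N \<le> a" "N \<le> b" "d (x a) (x b) < \<epsilon> + \<delta>'" for a b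
    proof -
      have "d (x a) (x b) < \<epsilon> + \<delta>" using that(3) \<delta>' by linarith
      then show ?thesis using MKp that(1,2) by blast
    qed
    have "\<delta>'/real \<nu> > 0" using \<delta>' assms(1) by simp
    then obtain N1 where N1: "\<forall>n\<ge>N1. d (x n) (x (n+1)) < \<delta>'/real \<nu>"
      using sgall[of 1] unfolding sg_def by blast
    have pos: "\<epsilon> + \<delta>' > 0" using \<epsilon> \<delta>' by simp
    have "\<forall>K\<le>\<nu>. \<exists>N. \<forall>n\<ge>N. d (x n) (x (n+K)) < \<epsilon>+\<delta>'"
      using sgall pos unfolding sg_def by blast
    from fin_ex[OF this] obtain N2 where N2: "\<forall>K\<le>\<nu>. \<forall>n\<ge>N2. d (x n) (x (n+K)) < \<epsilon>+\<delta>'"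
      by blast
    define n0 where "n0 = N + N1 + N2"
    have S: "\<forall>a\<ge>n0. d (x a) (x (a+K)) < \<epsilon>+\<delta>'" if "K \<ge> 1" for K
      using that
    proof (induction K rule: less_induct)
      case (less K)
      show ?case
      proof (intro allI impI)
        fix a assume a: "n0 \<le> a"
        show "d (x a) (x (a+K)) < \<epsilon>+\<delta>'"
        proof (cases "K \<le> \<nu>")
          case True then show ?thesis using N2 a by (simp add: n0_def)
        next
          case False
          then have Kn: "K > \<nu>" by simp
          have s1: "(\<Sum>i<\<nu>. d (x (a+i)) (x (a+Suc i))) < (\<Sum>i<\<nu>. \<delta>'/real \<nu>)"
          proof (rule sum_strict_mono)
            show "{..<\<nu>} \<noteq> {}" using assms(1) lessThan_empty_iff by (metis not_one_le_zero)
          next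
            fix i assume "i \<in> {..<\<nu>}"
            have "a + i \<ge> N1" using a by (simp add: n0_def)
            then have "d (x (a+i)) (x (a+i+1)) < \<delta>'/real \<nu>" using N1 by blast
            then show "d (x (a+i)) (x (a+Suc i)) < \<delta>'/real \<nu>" by simp
          qed simp
          have s2: "(\<Sum>i<\<nu>. \<delta>'/real \<nu>) = \<delta>'" using assms(1) by simp
          have lt: "K - \<nu> < K" "1 \<le> K - \<nu>" using Kn assms(1) by simp_all
          have a1: "n0 \<le> a + \<nu> - 1" using a assms(1) by simp
          have IH: "d (x (a+\<nu>-1)) (x (a+\<nu>-1 + (K-\<nu>))) < \<epsilon>+\<delta>'"
            using less.IH[OF lt] a1 by blast
          have eq: "a+\<nu>-1 + (K-\<nu>) = a+K-1" using Kn assms(1) by simp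
          have "d (x (a+\<nu>-1+1)) (x (a+K-1+1)) \<le> \<epsilon>"
            by (rule MK') (use IH eq a1 in \<open>auto simp: n0_def\<close>)
          moreover have "a+\<nu>-1+1 = a+\<nu>" "a+K-1+1 = a+K" using assms(1) Kn by simp_all
          ultimately have s3: "d (x (a+\<nu>)) (x (a+K)) \<le> \<epsilon>" by simp
          have "d (x a) (x (a+K)) \<le> (\<Sum>i<\<nu>. d (x (a+i)) (x (a+Suc i))) + d (x (a+\<nu>)) (x (a+K))"
            by (rule chain[OF met assms(3) Kn])
          then show ?thesis using s1 s2 s3 by linarith
        qed
      qed
    qed
    show "\<exists>M. \<forall>n\<ge>M. \<forall>k. d (x n) (x (n+1+k)) < e"
    proof (rule exI[of _ n0], intro allI impI)
      fix n k assume "n0 \<le> n"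
      then have "d (x n) (x (n+(1+k))) < \<epsilon>+\<delta>'" using S[of "1+k"] by simp
      then show "d (x n) (x (n+1+k)) < e" using \<delta>' by (simp add: \<epsilon>_def add.assoc)
    qed
  qed
  show ?thesis unfolding gen_cauchy_def
  proof (rule order_tendstoI)
    fix a :: ereal assume a0: "a < 0"
    show "\<forall>\<^sub>F n in sequentially. a < (SUP k. ereal (d (x n) (x (n + 1 + k))))"
    proof (rule always_eventually, rule allI)
      fix n
      have "ereal (d (x n) (x (n+1+0))) \<le> (SUP k. ereal (d (x n) (x (n + 1 + k))))"
        by (rule SUP_upper) simp
      moreover have "(0::ereal) \<le> ereal (d (x n) (x (n+1+0)))" using nn by simp
      ultimately show "a < (SUP k. ereal (d (x n) (x (n + 1 + k))))"
        using a0 by (meson less_le_trans)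
    qed
  next
    fix a :: ereal assume "0 < a"
    from ereal_dense2[OF this] obtain z where z: "0 < ereal z" "ereal z < a" by blast
    then have "z > 0" by simp
    with claim obtain M where M: "\<forall>n\<ge>M. \<forall>k. d (x n) (x (n+1+k)) < z" by blast
    show "\<forall>\<^sub>F n in sequentially. (SUP k. ereal (d (x n) (x (n + 1 + k)))) < a"
    proof (rule eventually_sequentiallyI[of M])
      fix n assume "M \<le> n"
      have "(SUP k. ereal (d (x n) (x (n + 1 + k)))) \<le> ereal z"
        by (rule SUP_least) (use M \<open>M \<le> n\<close> in \<open>auto intro: less_imp_le\<close>)
      then show "(SUP k. ereal (d (x n) (x (n + 1 + k)))) < a" using z(2) by (rule le_less_trans)
    qed
  qed
qed

end
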